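(* Let $P\in\mathbb{R}_+^{n\times n}$ be a stochastic irreducible matrix, $w\in\mathbb{R}^n_+$, $c\in\mathbb{R}^n$, and let $\mathcal X=\{x\in\mathbb{R}^n:\,x=S_0^w(P'x+c)\}$. Let $\pi$ be the unique invariant probability vector of $P$ ($\pi=P'\pi$, $\pi\ge0$, $\mathbbm{1}'\pi=1$; it has positive entries), and, when $\sum_ic_i=0$, let $\nu=\frac12\sum_{k\ge0}\left(\frac{I+P'}{2}\right)^kc$ (a convergent series in that case). Then $\mathcal X$ contains more than one element if and only if $\sum_ic_i=0$ and $$\min_i\left\{\frac{\nu_i}{\pi_i}\right\}+\min_i\left\{\frac{w_i-\nu_i}{\pi_i}\right\}>0.$$ Moreover, in this case, $$\mathcal X=\left\{\nu+\alpha\pi:\,-\min_i\left\{\frac{\nu_i}{\pi_i}\right\}\le\alpha\le\min_i\left\{\frac{w_i-\nu_i}{\pi_i}\right\}\right\}.$$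
   Context: $P$ stochastic: nonnegative with $P\mathbbm{1}=\mathbbm{1}$; irreducible: the directed graph with a link $(i,j)$ whenever $P_{ij}>0$ is strongly connected. $(S_0^w(x))_i=\min\{\max\{x_i,0\},w_i\}$; $P'$ is the transpose. *)

theory Defs
  imports "HOL-Analysis.Analysis"
begin

definition stochastic :: "real^'n^'n \<Rightarrow> bool" where
  "stochastic P \<longleftrightarrow> (\<forall>i j. P $ i $ j \<ge> 0) \<and> P *v (\<chi> i. 1) = (\<chi> i. 1)"

definition irreducible_mat :: "real^'n^'n \<Rightarrow> bool" where
  "irreducible_mat P \<longleftrightarrow> (\<forall>i j. (i, j) \<in> {(a, b). P $ a $ b > 0}\<^sup>*)"

definition sat0 :: "real^'n \<Rightarrow> real^'n \<Rightarrow> real^'n" where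
  "sat0 w x = (\<chi> i. min (max (x $ i) 0) (w $ i))"

definition nu_vec :: "real^'n^'n \<Rightarrow> real^'n \<Rightarrow> real^'n" where
  "nu_vec P c = (1/2) *\<^sub>R (\<Sum>k. (((\<lambda>x. (1/2) *\<^sub>R (x + transpose P *v x)) ^^ k) c))"

end

theory Submission
  imports Defs
begin

declare transpose_matrix_vector[simp del]

lemma Pt_comp: "(transpose P *v x) $ i = (\<Sum>j\<in>UNIV. P$j$i * x$j)"
  by (simp add: matrix_vector_mult_def transpose_def)

lemma stoch_nonneg: "stochastic P \<Longrightarrow> P$i$j \<ge> 0"
  by (simp add: stochastic_def)

lemma stoch_row: "stochastic P \<Longrightarrow> (\<Sum>j\<in>UNIV. P$i$j) = 1"
proof -
  assume "stochastic P"
  then have "(P *v (\<chi> i. 1)) $ i = 1" by (simp add: stochastic_def)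
  then show ?thesis by (simp add: matrix_vector_mult_def)
qed

lemma sum_Pt: assumes "stochastic P"
  shows "(\<Sum>i\<in>UNIV. (transpose P *v x)$i) = (\<Sum>i\<in>UNIV. x$i)"
proof -
  have "(\<Sum>i\<in>UNIV. (transpose P *v x)$i) = (\<Sum>i\<in>UNIV. \<Sum>j\<in>UNIV. P$j$i * x$j)"
    by (intro sum.cong refl) (rule Pt_comp)
  also have "\<dots> = (\<Sum>j\<in>UNIV. \<Sum>i\<in>UNIV. P$j$i * x$j)" by (rule sum.swap)
  also have "\<dots> = (\<Sum>j\<in>UNIV. x$j * (\<Sum>i\<in>UNIV. P$j$i))"
    by (simp add: sum_distrib_left mult.commute)
  also have "\<dots> = (\<Sum>j\<in>UNIV. x$j)" using stoch_row[OF assms] by simp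
  finally show ?thesis .
qed

lemma zero_prop:
  assumes st: "stochastic P" and irr: "irreducible_mat P"
    and nn: "\<forall>i. q$i \<ge> 0" and inv: "q = transpose P *v q" and z: "q$i0 = 0"
  shows "q$j = 0"
proof -
  have "(j, i0) \<in> {(a, b). P $ a $ b > 0}\<^sup>*" using irr by (simp add: irreducible_mat_def)
  then show ?thesis
  proof (induction rule: converse_rtrancl_induct)
    case base
    then show ?case using z by simp
  next
    case (step a b)
    have "(\<Sum>k\<in>UNIV. P$k$b * q$k) = 0" using step.IH inv Pt_comp[of P q b] by simp
    then have "\<forall>k\<in>UNIV. P$k$b * q$k = 0"
      by (subst sum_nonneg_eq_0_iff[symmetric]) (auto simp: nn stoch_nonneg[OF st])
    then have "P$a$b * q$a = 0" by simp
    moreover have "P$a$b > 0" using step.hyps(1) by simp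
    ultimately show ?case by simp
  qed
qed

lemma pi_pos:
  assumes st: "stochastic P" and irr: "irreducible_mat P"
    and "\<pi> = transpose P *v \<pi>" and "\<forall>i. \<pi> $ i \<ge> 0" and "(\<Sum>i\<in>UNIV. \<pi> $ i) = 1"
  shows "\<pi>$i > 0"
proof (rule ccontr)
  assume "\<not> \<pi>$i > 0"
  then have "\<pi>$i \<le> 0" by simp
  then have "\<pi>$i = 0" using assms(4) by (meson antisym)
  then have "\<forall>j. \<pi>$j = 0" using zero_prop[OF st irr assms(4,3)] by blast
  then show False using assms(5) by simp
qed

lemma inv_span:
  assumes st: "stochastic P" and irr: "irreducible_mat P"
    and pinv: "\<pi> = transpose P *v \<pi>" and ppos: "\<forall>i. \<pi> $ i > 0"
    and zinv: "z = transpose P *v z"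
  shows "\<exists>s. z = s *\<^sub>R \<pi>"
proof -
  define s where "s = Min (range (\<lambda>i. z$i/\<pi>$i))"
  have "s \<in> range (\<lambda>i. z$i/\<pi>$i)" unfolding s_def by (rule Min_in) auto
  then obtain i0 where i0: "s = z$i0/\<pi>$i0" by auto
  define q where "q = z - s *\<^sub>R \<pi>"
  have nn: "\<forall>i. q$i \<ge> 0"
  proof
    fix i
    have "s \<le> z$i/\<pi>$i" unfolding s_def by (rule Min_le) auto
    then have "s * \<pi>$i \<le> z$i" using ppos by (simp add: pos_le_divide_eq)
    then show "q$i \<ge> 0" by (simp add: q_def)
  qed
  have qinv: "q = transpose P *v q"
    unfolding q_def using pinv zinv
    by (metis matrix_vector_mult_diff_distrib matrix_vector_mult_scaleR)
  have "\<pi>$i0 \<noteq> 0" using ppos by (metis less_irrefl)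
  then have "q$i0 = 0" using i0 by (simp add: q_def)
  then have "\<forall>j. q$j = 0" using zero_prop[OF st irr nn qinv] by blast
  then have "z = s *\<^sub>R \<pi>" by (simp add: q_def vec_eq_iff)
  then show ?thesis by blast
qed

definition fP :: "real^'n^'n \<Rightarrow> real^'n \<Rightarrow> real^'n" where
  "fP P x = (1/2) *\<^sub>R (x + transpose P *v x)"

lemma fP_comp: "(fP P x)$i = (x$i + (\<Sum>j\<in>UNIV. P$j$i * x$j))/2"
  by (simp add: fP_def Pt_comp)

lemma linear_fP: "linear (fP P)"
  by (rule linearI) (simp_all add: fP_def matrix_vector_right_distrib
      matrix_vector_mult_scaleR algebra_simps)

lemma linear_fP_pow: "linear (fP P ^^ k)"
proof (induction k)
  case 0
  then show ?case by (simp add: bounded_linear.linear[OF bounded_linear_ident])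
next
  case (Suc k)
  then show ?case using linear_compose[OF Suc.IH linear_fP[of P]] by (simp add: o_def)
qed

lemma sum_fP: "stochastic P \<Longrightarrow> (\<Sum>i\<in>UNIV. (fP P x)$i) = (\<Sum>i\<in>UNIV. x$i)"
proof -
  assume st: "stochastic P"
  have "(\<Sum>i\<in>UNIV. (fP P x)$i) = (\<Sum>i\<in>UNIV. (x$i + (transpose P *v x)$i)/2)"
    by (simp add: fP_def)
  also have "\<dots> = ((\<Sum>i\<in>UNIV. x$i) + (\<Sum>i\<in>UNIV. (transpose P *v x)$i))/2"
    by (simp only: sum_divide_distrib[symmetric] sum.distrib)
  finally show ?thesis using sum_Pt[OF st, of x] by simp
qed

lemma sum_fP_pow: "stochastic P \<Longrightarrow> (\<Sum>i\<in>UNIV. ((fP P ^^ k) x)$i) = (\<Sum>i\<in>UNIV. x$i)"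
  by (induction k) (simp_all add: sum_fP)

lemma fP_nonneg: assumes "stochastic P" "\<forall>i. x$i \<ge> 0" shows "\<forall>i. (fP P x)$i \<ge> 0"
  using assms by (auto simp: fP_comp stoch_nonneg intro!: add_nonneg_nonneg sum_nonneg)

lemma fP_pow_nonneg: assumes "stochastic P" "\<forall>i. x$i \<ge> 0" shows "\<forall>i. ((fP P ^^ k) x)$i \<ge> 0"
  using assms by (induction k) (simp_all add: fP_nonneg)

lemma fP_ge_self: assumes "stochastic P" "\<forall>i. x$i \<ge> 0" shows "(fP P x)$i \<ge> x$i/2"
proof -
  have "(\<Sum>j\<in>UNIV. P$j$i * x$j) \<ge> 0" using assms by (auto simp: stoch_nonneg intro!: sum_nonneg)
  then show ?thesis by (simp add: fP_comp)
qed

lemma fP_ge_edge: assumes "stochastic P" "\<forall>i. x$i \<ge> 0" shows "(fP P x)$i \<ge> P$a$i * x$a/2"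
proof -
  have "P$a$i * x$a \<le> (\<Sum>j\<in>UNIV. P$j$i * x$j)"
    by (rule member_le_sum[where f="\<lambda>j. P$j$i * x$j"]) (use assms in \<open>auto simp: stoch_nonneg\<close>)
  then show ?thesis using assms(2)[rule_format, of i] by (simp add: fP_comp)
qed

lemma l1_fP: assumes "stochastic P"
  shows "(\<Sum>i\<in>UNIV. \<bar>(fP P x)$i\<bar>) \<le> (\<Sum>i\<in>UNIV. \<bar>x$i\<bar>)"
proof -
  have "\<bar>(fP P x)$i\<bar> \<le> (\<bar>x$i\<bar> + (transpose P *v (\<chi> k. \<bar>x$k\<bar>))$i)/2" for i
  proof -
    have "\<bar>\<Sum>j\<in>UNIV. P$j$i * x$j\<bar> \<le> (\<Sum>j\<in>UNIV. \<bar>P$j$i * x$j\<bar>)" by (rule sum_abs)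
    also have "\<dots> = (\<Sum>j\<in>UNIV. P$j$i * \<bar>x$j\<bar>)"
      using assms by (simp add: abs_mult stoch_nonneg)
    finally have "\<bar>\<Sum>j\<in>UNIV. P$j$i * x$j\<bar> \<le> (\<Sum>j\<in>UNIV. P$j$i * \<bar>x$j\<bar>)" .
    then show ?thesis using abs_triangle_ineq[of "x$i" "\<Sum>j\<in>UNIV. P$j$i * x$j"]
      by (simp add: fP_comp Pt_comp)
  qed
  then have "(\<Sum>i\<in>UNIV. \<bar>(fP P x)$i\<bar>) \<le> (\<Sum>i\<in>UNIV. (\<bar>x$i\<bar> + (transpose P *v (\<chi> k. \<bar>x$k\<bar>))$i)/2)"
    by (rule sum_mono)
  also have "\<dots> = ((\<Sum>i\<in>UNIV. \<bar>x$i\<bar>) + (\<Sum>i\<in>UNIV. (transpose P *v (\<chi> k. \<bar>x$k\<bar>))$i))/2"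
    by (simp only: sum_divide_distrib[symmetric] sum.distrib)
  also have "\<dots> = (\<Sum>i\<in>UNIV. \<bar>x$i\<bar>)" using sum_Pt[OF assms, of "\<chi> k. \<bar>x$k\<bar>"] by simp
  finally show ?thesis .
qed

lemma l1_fP_pow: assumes "stochastic P"
  shows "(\<Sum>i\<in>UNIV. \<bar>((fP P ^^ k) x)$i\<bar>) \<le> (\<Sum>i\<in>UNIV. \<bar>x$i\<bar>)"
  by (induction k) (auto intro: order_trans[OF l1_fP[OF assms]])

lemma fP_pow_pos_mono: assumes "stochastic P" "\<forall>i. x$i \<ge> 0" "x$i > 0"
  shows "((fP P ^^ d) x)$i > 0"
proof (induction d)
  case 0
  then show ?case using assms by simp
next
  case (Suc d)
  have "(fP P ((fP P ^^ d) x))$i \<ge> ((fP P ^^ d) x)$i/2"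
    by (rule fP_ge_self[OF assms(1) fP_pow_nonneg[OF assms(1,2)]])
  then show ?case using Suc.IH by simp
qed

lemma fP_reach: assumes "stochastic P"
  shows "(j, i) \<in> {(a, b). P $ a $ b > 0} ^^ l \<Longrightarrow> ((fP P ^^ l) (axis j 1 :: real^'n))$i > 0"
proof (induction l arbitrary: i)
  case 0
  then show ?case by (simp add: axis_def)
next
  case (Suc l)
  from Suc.prems obtain a where a: "(j, a) \<in> {(a, b). P $ a $ b > 0} ^^ l" "P$a$i > 0"
    by (auto elim: relpow_Suc_E)
  have nn: "\<forall>k. (axis j 1 :: real^'n)$k \<ge> 0" by (simp add: axis_def)
  have "(fP P ((fP P ^^ l) (axis j 1)))$i \<ge> P$a$i * ((fP P ^^ l) (axis j 1))$a/2"
    by (rule fP_ge_edge[OF assms fP_pow_nonneg[OF assms nn]])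
  moreover have "P$a$i * ((fP P ^^ l) (axis j 1))$a > 0" using a Suc.IH by simp
  ultimately show ?case by simp
qed

lemma exists_m:
  assumes st: "stochastic P" and irr: "irreducible_mat P"
  shows "\<exists>m>0. \<forall>i j. ((fP P ^^ m) (axis j 1 :: real^'n))$i > 0"
proof -
  define R where "R = {(a, b). P $ a $ b > 0}"
  have "\<forall>i j. \<exists>l. (j, i) \<in> R ^^ l" using irr unfolding irreducible_mat_def R_def
    by (simp add: rtrancl_power)
  then obtain L where L: "\<And>i j. (j, i) \<in> R ^^ L i j" by metis
  define m where "m = Suc (Max (range (\<lambda>p. L (fst p) (snd p))))"
  have "\<forall>i j. ((fP P ^^ m) (axis j 1 :: real^'n))$i > 0"
  proof (intro allI)
    fix i j :: 'n
    have "L i j \<le> Max (range (\<lambda>p. L (fst p) (snd p)))"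
      by (rule Max_ge) (auto intro: image_eqI[where x="(i,j)"])
    then have m: "m = (m - L i j) + L i j" unfolding m_def by simp
    have nn: "\<forall>k. (axis j 1 :: real^'n)$k \<ge> 0" by (simp add: axis_def)
    have pos: "((fP P ^^ L i j) (axis j 1 :: real^'n))$i > 0"
      using fP_reach[OF st, of j i "L i j"] L[of j i] unfolding R_def by simp
    have "((fP P ^^ (m - L i j)) ((fP P ^^ L i j) (axis j 1 :: real^'n)))$i > 0"
      by (rule fP_pow_pos_mono[OF st fP_pow_nonneg[OF st nn] pos])
    then show "((fP P ^^ m) (axis j 1 :: real^'n))$i > 0"
      by (subst m) (simp add: funpow_add)
  qed
  then show ?thesis unfolding m_def by blast
qed

lemma lower_bound:
  fixes F :: "real^'n \<Rightarrow> real^'n"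
  assumes lin: "linear F" and pos: "\<forall>i j. (F (axis j 1 :: real^'n))$i > 0"
  shows "\<exists>\<delta>>0. \<forall>g::real^'n. (\<forall>i. g$i \<ge> 0) \<longrightarrow> (\<forall>i. (F g)$i \<ge> \<delta> * (\<Sum>j\<in>UNIV. g$j))"
proof -
  define \<delta> where "\<delta> = Min (range (\<lambda>p. (F (axis (snd p) 1 :: real^'n))$(fst p)))"
  have "\<delta> \<in> range (\<lambda>p. (F (axis (snd p) 1 :: real^'n))$(fst p))"
    unfolding \<delta>_def by (rule Min_in) auto
  then have dpos: "\<delta> > 0" using pos by auto
  have dle: "\<delta> \<le> (F (axis j 1 :: real^'n))$i" for i j
    unfolding \<delta>_def by (rule Min_le) (auto intro: image_eqI[where x="(i,j)"])
  have "(F g)$i \<ge> \<delta> * (\<Sum>j\<in>UNIV. g$j)" if g: "\<forall>i. g$i \<ge> 0" for g :: "real^'n" and i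
  proof -
    have "F g = F (\<Sum>j\<in>UNIV. g$j *\<^sub>R axis j 1)"
      using basis_expansion[of g] by (simp add: scalar_mult_eq_scaleR)
    also have "\<dots> = (\<Sum>j\<in>UNIV. g$j *\<^sub>R F (axis j 1))"
      by (simp add: linear_sum[OF lin] linear_scale[OF lin])
    finally have "(F g)$i = (\<Sum>j\<in>UNIV. g$j * (F (axis j 1))$i)" by simp
    moreover have "(\<Sum>j\<in>UNIV. g$j * \<delta>) \<le> (\<Sum>j\<in>UNIV. g$j * (F (axis j 1))$i)"
      by (rule sum_mono) (use g dle in \<open>simp add: mult_left_mono\<close>)
    ultimately show ?thesis by (simp add: sum_distrib_left mult.commute)
  qed
  then show ?thesis using dpos by blast
qed

lemma contraction:
  fixes F :: "real^'n \<Rightarrow> real^'n"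
  assumes lin: "linear F" and dpos: "\<delta> > 0"
    and lb: "\<forall>g::real^'n. (\<forall>i. g$i \<ge> 0) \<longrightarrow> (\<forall>i. (F g)$i \<ge> \<delta> * (\<Sum>j\<in>UNIV. g$j))"
    and sp: "\<And>x. (\<Sum>i\<in>UNIV. (F x)$i) = (\<Sum>i\<in>UNIV. x$i)"
    and z0: "(\<Sum>i\<in>UNIV. z$i) = 0"
  shows "(\<Sum>i\<in>UNIV. \<bar>(F z)$i\<bar>) \<le> (1 - \<delta>) * (\<Sum>i\<in>UNIV. \<bar>z$i\<bar>)"
proof -
  define zp :: "real^'n" where "zp = (\<chi> i. max (z$i) 0)"
  define zm :: "real^'n" where "zm = (\<chi> i. max (- z$i) 0)"
  have zeq: "z = zp - zm" by (auto simp: vec_eq_iff zp_def zm_def)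
  have zpn: "\<forall>i. zp$i \<ge> 0" and zmn: "\<forall>i. zm$i \<ge> 0" by (auto simp: zp_def zm_def)
  have "(\<Sum>i\<in>UNIV. z$i) = (\<Sum>i\<in>UNIV. zp$i) - (\<Sum>i\<in>UNIV. zm$i)"
    by (subst zeq) (simp add: sum_subtractf)
  then have seq: "(\<Sum>i\<in>UNIV. zm$i) = (\<Sum>i\<in>UNIV. zp$i)" using z0 by simp
  define s where "s = (\<Sum>i\<in>UNIV. zp$i)"
  have s0: "s \<ge> 0" unfolding s_def using zpn by (simp add: sum_nonneg)
  have l1z: "(\<Sum>i\<in>UNIV. \<bar>z$i\<bar>) = 2 * s"
  proof -
    have "(\<Sum>i\<in>UNIV. \<bar>z$i\<bar>) = (\<Sum>i\<in>UNIV. zp$i + zm$i)"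
      by (rule sum.cong) (auto simp: zp_def zm_def)
    then show ?thesis using seq by (simp add: sum.distrib s_def)
  qed
  define a where "a = F zp"
  define b where "b = F zm"
  have Fz: "F z = a - b" unfolding a_def b_def by (subst zeq) (simp add: linear_diff[OF lin])
  have al: "a$i \<ge> \<delta> * s" for i using lb zpn unfolding a_def s_def by blast
  have bl: "b$i \<ge> \<delta> * s" for i using lb zmn seq unfolding b_def s_def by metis
  have "(\<Sum>i\<in>UNIV. \<bar>(F z)$i\<bar>) \<le> (\<Sum>i\<in>UNIV. (a$i - \<delta> * s) + (b$i - \<delta> * s))"
    by (rule sum_mono) (use al bl in \<open>auto simp: Fz abs_le_iff\<close>)
  also have "\<dots> = s + s - real CARD('n) * (2 * \<delta> * s)"
    using sp[of zp] sp[of zm] seq by (simp add: sum.distrib sum_subtractf a_def b_def s_def)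
  also have "\<dots> \<le> s + s - 1 * (2 * \<delta> * s)"
  proof -
    have "real CARD('n) \<ge> 1" by (simp add: Suc_le_eq)
    moreover have "2 * \<delta> * s \<ge> 0" using dpos s0 by simp
    ultimately have "1 * (2 * \<delta> * s) \<le> real CARD('n) * (2 * \<delta> * s)"
      by (rule mult_right_mono)
    then show ?thesis by linarith
  qed
  also have "\<dots> = (1 - \<delta>) * (\<Sum>i\<in>UNIV. \<bar>z$i\<bar>)" using l1z by (simp add: algebra_simps)
  finally show ?thesis .
qed

lemma summable_iter:
  assumes st: "stochastic P" and irr: "irreducible_mat P"
    and c0: "(\<Sum>i\<in>UNIV. c$i) = 0"
  shows "summable (\<lambda>k. (fP P ^^ k) (c::real^'n))"
proof -
  obtain m where m0: "m > 0" and mpos: "\<forall>i j. ((fP P ^^ m) (axis j 1 :: real^'n))$i > 0"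
    using exists_m[OF st irr] by blast
  obtain \<delta> where dpos: "\<delta> > 0" and lb: "\<forall>g::real^'n. (\<forall>i. g$i \<ge> 0) \<longrightarrow>
      (\<forall>i. ((fP P ^^ m) g)$i \<ge> \<delta> * (\<Sum>j\<in>UNIV. g$j))"
    using lower_bound[OF linear_fP_pow mpos] by blast
  define r where "r = 1 / (1 + \<delta>)"
  have r0: "r > 0" and r1: "r < 1" using dpos by (simp_all add: r_def)
  have dr: "1 - \<delta> \<le> r" using dpos by (simp add: r_def field_simps)
  define l1 :: "real^'n \<Rightarrow> real" where "l1 z = (\<Sum>i\<in>UNIV. \<bar>z$i\<bar>)" for z
  have l1nn: "l1 z \<ge> 0" for z unfolding l1_def by (simp add: sum_nonneg)
  have contr: "l1 ((fP P ^^ m) z) \<le> r * l1 z" if "(\<Sum>i\<in>UNIV. z$i) = 0" for z :: "real^'n"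
  proof -
    have "l1 ((fP P ^^ m) z) \<le> (1 - \<delta>) * l1 z"
      unfolding l1_def
      by (rule contraction[OF linear_fP_pow dpos lb sum_fP_pow[OF st] that])
    also have "\<dots> \<le> r * l1 z" using dr l1nn[of z] by (simp add: mult_right_mono)
    finally show ?thesis .
  qed
  have q: "l1 ((fP P ^^ (q * m)) c) \<le> r ^ q * l1 c" for q
  proof (induction q)
    case 0
    then show ?case by simp
  next
    case (Suc q)
    have eq: "(fP P ^^ (Suc q * m)) c = (fP P ^^ m) ((fP P ^^ (q * m)) c)"
      by (simp add: funpow_add)
    have "l1 ((fP P ^^ (Suc q * m)) c) \<le> r * l1 ((fP P ^^ (q * m)) c)"
      unfolding eq by (rule contr) (simp add: sum_fP_pow[OF st] c0)
    also have "\<dots> \<le> r * (r ^ q * l1 c)" using Suc.IH r0 by (simp add: mult_left_mono)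
    finally show ?case by simp
  qed
  have kb: "l1 ((fP P ^^ k) c) \<le> r ^ (k div m) * l1 c" for k
  proof -
    have "k = k mod m + (k div m) * m" by simp
    then have eq: "(fP P ^^ k) c = (fP P ^^ (k mod m)) ((fP P ^^ ((k div m) * m)) c)"
      by (metis funpow_add o_apply)
    have "l1 ((fP P ^^ k) c) \<le> l1 ((fP P ^^ ((k div m) * m)) c)"
      unfolding eq l1_def by (rule l1_fP_pow[OF st])
    also have "\<dots> \<le> r ^ (k div m) * l1 c" by (rule q)
    finally show ?thesis .
  qed
  define \<rho> where "\<rho> = root m r"
  have rho0: "\<rho> > 0" using r0 m0 by (simp add: \<rho>_def)
  have rho1: "\<rho> < 1" using r1 r0 m0 by (simp add: \<rho>_def)
  have rhom: "\<rho> ^ m = r" using r0 m0 by (simp add: \<rho>_def real_root_pow_pos2)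
  have rb: "r ^ (k div m) \<le> \<rho> ^ k / \<rho> ^ m" for k
  proof -
    have "\<rho> ^ k = \<rho> ^ (k mod m) * \<rho> ^ (m * (k div m))"
      by (metis power_add mod_mult_div_eq)
    also have "\<rho> ^ (m * (k div m)) = r ^ (k div m)" by (simp add: power_mult rhom)
    finally have e: "\<rho> ^ k = \<rho> ^ (k mod m) * r ^ (k div m)" .
    have "\<rho> ^ m \<le> \<rho> ^ (k mod m)"
      by (rule power_decreasing) (use m0 rho0 rho1 in auto)
    then have "\<rho> ^ m * r ^ (k div m) \<le> \<rho> ^ (k mod m) * r ^ (k div m)"
      using r0 by (simp add: mult_right_mono)
    then show ?thesis using e rho0 by (simp add: field_simps)
  qed
  show ?thesis
  proof (rule summable_comparison_test)
    show "\<exists>N. \<forall>k\<ge>N. norm ((fP P ^^ k) c) \<le> l1 c / \<rho> ^ m * \<rho> ^ k"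
    proof (intro exI allI impI)
      fix k
      have "norm ((fP P ^^ k) c) \<le> l1 ((fP P ^^ k) c)" unfolding l1_def by (rule norm_le_l1_cart)
      also have "\<dots> \<le> r ^ (k div m) * l1 c" by (rule kb)
      also have "\<dots> \<le> \<rho> ^ k / \<rho> ^ m * l1 c" by (rule mult_right_mono[OF rb l1nn])
      finally show "norm ((fP P ^^ k) c) \<le> l1 c / \<rho> ^ m * \<rho> ^ k" by (simp add: mult.commute)
    qed
    show "summable (\<lambda>k. l1 c / \<rho> ^ m * \<rho> ^ k)"
      by (rule summable_mult) (rule summable_geometric, use rho0 rho1 in simp)
  qed
qed

lemma nu_fix:
  assumes st: "stochastic P" and irr: "irreducible_mat P"
    and c0: "(\<Sum>i\<in>UNIV. c$i) = 0"
  shows "nu_vec P c = transpose P *v nu_vec P c + c"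
proof -
  define S where "S = (\<Sum>k. (fP P ^^ k) c)"
  have sm: "summable (\<lambda>k. (fP P ^^ k) c)" by (rule summable_iter[OF st irr c0])
  have nu: "nu_vec P c = (1/2) *\<^sub>R S" unfolding nu_vec_def S_def fP_def[abs_def] by simp
  have "fP P S = (\<Sum>k. fP P ((fP P ^^ k) c))" unfolding S_def
    by (rule bounded_linear.suminf[OF _ sm]) (simp add: linear_conv_bounded_linear[symmetric] linear_fP)
  also have "\<dots> = (\<Sum>k. (fP P ^^ Suc k) c)" by simp
  also have "\<dots> = S - c" unfolding S_def by (subst suminf_split_head[OF sm]) simp
  finally have "fP P S = S - c" .
  then have "(1/2) *\<^sub>R (S + transpose P *v S) = S - c" by (simp add: fP_def)
  then have "transpose P *v S = S - 2 *\<^sub>R c"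
    by (simp add: vec_eq_iff field_simps)
  then show ?thesis unfolding nu
    by (simp add: matrix_vector_mult_scaleR vec_eq_iff field_simps)
qed

lemma clip_lip: "\<bar>min (max (u::real) 0) w - min (max v 0) w\<bar> \<le> \<bar>u - v\<bar>"
  by (auto simp: min_def max_def abs_if)

lemma clip_eq: "\<bar>min (max (u::real) 0) w - min (max v 0) w\<bar> = \<bar>u - v\<bar> \<Longrightarrow>
   min (max u 0) w - min (max v 0) w = u - v"
  by (auto simp: min_def max_def abs_if split: if_splits)

lemma clip_exact: "(w::real) \<ge> 0 \<Longrightarrow> min (max u 0) w - min (max v 0) w = u - v \<Longrightarrow> u \<noteq> v \<Longrightarrow>
   min (max u 0) w = u \<and> min (max v 0) w = v"
  by (auto simp: min_def max_def split: if_splits)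

lemma two_fix:
  assumes st: "stochastic P" and irr: "irreducible_mat P"
    and w0: "\<forall>i. w $ i \<ge> 0"
    and pinv: "\<pi> = transpose P *v \<pi>" and ppos: "\<forall>i. \<pi> $ i > 0"
    and hx: "x = sat0 w (transpose P *v x + c)" and hy: "y = sat0 w (transpose P *v y + c)"
    and ne: "x \<noteq> y"
  shows "x = transpose P *v x + c"
proof -
  define u where "u = transpose P *v x + c"
  define v where "v = transpose P *v y + c"
  define d where "d = x - y"
  have xi: "x$i = min (max (u$i) 0) (w$i)" for i
    using arg_cong[OF hx, of "\<lambda>z. z$i"] unfolding u_def by (simp add: sat0_def)
  have yi: "y$i = min (max (v$i) 0) (w$i)" for i
    using arg_cong[OF hy, of "\<lambda>z. z$i"] unfolding v_def by (simp add: sat0_def)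
  have uv: "u - v = transpose P *v d" unfolding u_def v_def d_def
    by (simp add: matrix_vector_mult_diff_distrib)
  have a1: "\<bar>d$i\<bar> \<le> \<bar>(transpose P *v d)$i\<bar>" for i
    using clip_lip[of "u$i" "w$i" "v$i"] xi[of i] yi[of i] uv by (simp add: d_def vec_eq_iff)
  have a2: "\<bar>(transpose P *v d)$i\<bar> \<le> (transpose P *v (\<chi> k. \<bar>d$k\<bar>))$i" for i
  proof -
    have "\<bar>\<Sum>j\<in>UNIV. P$j$i * d$j\<bar> \<le> (\<Sum>j\<in>UNIV. \<bar>P$j$i * d$j\<bar>)" by (rule sum_abs)
    also have "\<dots> = (\<Sum>j\<in>UNIV. P$j$i * \<bar>d$j\<bar>)"
      using st by (simp add: abs_mult stoch_nonneg)
    finally show ?thesis by (simp add: Pt_comp)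
  qed
  define e where "e i = \<bar>(transpose P *v d)$i\<bar> - \<bar>d$i\<bar>" for i
  have e0: "e i \<ge> 0" for i using a1[of i] by (simp add: e_def)
  have "(\<Sum>i\<in>UNIV. e i) \<le> (\<Sum>i\<in>UNIV. (transpose P *v (\<chi> k. \<bar>d$k\<bar>))$i - \<bar>d$i\<bar>)"
    by (rule sum_mono) (use a2 in \<open>simp add: e_def\<close>)
  also have "\<dots> = 0" using sum_Pt[OF st, of "\<chi> k. \<bar>d$k\<bar>"] by (simp add: sum_subtractf)
  finally have "(\<Sum>i\<in>UNIV. e i) = 0" using e0 by (meson antisym sum_nonneg)
  then have "\<forall>i\<in>UNIV. e i = 0" using e0 by (subst sum_nonneg_eq_0_iff[symmetric]) auto
  then have eqabs: "\<bar>d$i\<bar> = \<bar>(transpose P *v d)$i\<bar>" for i by (simp add: e_def)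
  have dfix: "d$i = (transpose P *v d)$i" for i
  proof -
    have "\<bar>min (max (u$i) 0) (w$i) - min (max (v$i) 0) (w$i)\<bar> = \<bar>u$i - v$i\<bar>"
      using eqabs[of i] xi[of i] yi[of i] uv by (simp add: d_def vec_eq_iff)
    from clip_eq[OF this] show ?thesis using xi[of i] yi[of i] uv by (simp add: d_def vec_eq_iff)
  qed
  then have "d = transpose P *v d" by (simp add: vec_eq_iff)
  then obtain s where ds: "d = s *\<^sub>R \<pi>" using inv_span[OF st irr pinv ppos] by blast
  have s0: "s \<noteq> 0" using ne ds unfolding d_def by auto
  have "x$i = u$i" for i
  proof -
    have dne: "d$i \<noteq> 0" using ds s0 ppos by (simp add: less_irrefl) (metis less_irrefl)
    have e1: "min (max (u$i) 0) (w$i) - min (max (v$i) 0) (w$i) = u$i - v$i"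
      using dfix[of i] xi[of i] yi[of i] uv by (simp add: d_def vec_eq_iff)
    have "u$i \<noteq> v$i" using dne dfix[of i] uv by (simp add: vec_eq_iff) (metis right_minus_eq)
    from clip_exact[OF _ e1 this] w0 xi[of i] show ?thesis by simp
  qed
  then show ?thesis by (simp add: vec_eq_iff u_def)
qed

theorem proposition4:
  fixes P :: "real^'n^'n" and w c \<pi> :: "real^'n"
  assumes "stochastic P" and "irreducible_mat P"
    and "\<forall>i. w $ i \<ge> 0"
    and "\<pi> = transpose P *v \<pi>" and "\<forall>i. \<pi> $ i \<ge> 0" and "(\<Sum>i\<in>UNIV. \<pi> $ i) = 1"
  defines "X \<equiv> {x. x = sat0 w (transpose P *v x + c)}"
    and "\<nu> \<equiv> nu_vec P c"
  shows "((\<exists>x\<in>X. \<exists>y\<in>X. x \<noteq> y) \<longleftrightarrow>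
           (\<Sum>i\<in>UNIV. c $ i) = 0 \<and>
           (MIN i. \<nu> $ i / \<pi> $ i) + (MIN i. (w $ i - \<nu> $ i) / \<pi> $ i) > 0)
       \<and> ((\<exists>x\<in>X. \<exists>y\<in>X. x \<noteq> y) \<longrightarrow>
           X = {\<nu> + \<alpha> *\<^sub>R \<pi> | \<alpha>. - (MIN i. \<nu> $ i / \<pi> $ i) \<le> \<alpha> \<and>
                                      \<alpha> \<le> (MIN i. (w $ i - \<nu> $ i) / \<pi> $ i)})"
proof -
  note st = assms(1) and irr = assms(2) and w0 = assms(3) and pinv = assms(4)
  have ppos: "\<forall>i. \<pi> $ i > 0" using pi_pos[OF st irr pinv assms(5,6)] by blast
  define m1 where "m1 = (MIN i. \<nu> $ i / \<pi> $ i)"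
  define m2 where "m2 = (MIN i. (w $ i - \<nu> $ i) / \<pi> $ i)"
  define S where "S = {\<nu> + \<alpha> *\<^sub>R \<pi> | \<alpha>. - m1 \<le> \<alpha> \<and> \<alpha> \<le> m2}"
  have m1le: "m1 \<le> \<nu> $ i / \<pi> $ i" for i unfolding m1_def by (rule Min_le) auto
  have m2le: "m2 \<le> (w $ i - \<nu> $ i) / \<pi> $ i" for i unfolding m2_def by (rule Min_le) auto
  have inS: "\<nu> + \<alpha> *\<^sub>R \<pi> \<in> X" if c0: "(\<Sum>i\<in>UNIV. c $ i) = 0" and a1: "- m1 \<le> \<alpha>" and a2: "\<alpha> \<le> m2"
    for \<alpha>
  proof -
    have nf: "\<nu> = transpose P *v \<nu> + c" unfolding \<nu>_def by (rule nu_fix[OF st irr c0])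
    have fx: "transpose P *v (\<nu> + \<alpha> *\<^sub>R \<pi>) + c = \<nu> + \<alpha> *\<^sub>R \<pi>"
      using nf pinv by (simp add: matrix_vector_right_distrib matrix_vector_mult_scaleR vec_eq_iff)
    have "0 \<le> \<nu>$i + \<alpha> * \<pi>$i" for i
    proof -
      have "- \<alpha> \<le> \<nu>$i / \<pi>$i" using m1le[of i] a1 by linarith
      then have "- \<alpha> * \<pi>$i \<le> \<nu>$i" using ppos[rule_format, of i] by (simp add: pos_le_divide_eq)
      then show ?thesis by simp
    qed
    moreover have "\<nu>$i + \<alpha> * \<pi>$i \<le> w$i" for i
    proof -
      have "\<alpha> \<le> (w $ i - \<nu> $ i) / \<pi> $ i" using m2le[of i] a2 by linarith
      then have "\<alpha> * \<pi>$i \<le> w $ i - \<nu> $ i" using ppos[rule_format, of i] by (simp add: pos_le_divide_eq)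
      then show ?thesis by simp
    qed
    ultimately have "sat0 w (\<nu> + \<alpha> *\<^sub>R \<pi>) = \<nu> + \<alpha> *\<^sub>R \<pi>"
      by (simp add: sat0_def vec_eq_iff)
    then show ?thesis using fx unfolding X_def by simp
  qed
  have Xsub: "x \<in> S" if c0: "(\<Sum>i\<in>UNIV. c $ i) = 0" and xX: "x \<in> X" and xf: "x = transpose P *v x + c" for x
  proof -
    have nf: "\<nu> = transpose P *v \<nu> + c" unfolding \<nu>_def by (rule nu_fix[OF st irr c0])
    have "x - \<nu> = transpose P *v (x - \<nu>)"
      using nf xf by (simp add: matrix_vector_mult_diff_distrib vec_eq_iff)
    then obtain \<alpha> where xa: "x - \<nu> = \<alpha> *\<^sub>R \<pi>" using inv_span[OF st irr pinv ppos] by blast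
    have xi: "x$i = min (max ((transpose P *v x + c)$i) 0) (w$i)" for i
      using arg_cong[OF xX[unfolded X_def, simplified], of "\<lambda>z. z$i"] by (simp add: sat0_def)
    have xr: "0 \<le> x$i \<and> x$i \<le> w$i" for i using xi[of i] w0[rule_format, of i] by linarith
    have xc: "x$i = \<nu>$i + \<alpha> * \<pi>$i" for i using arg_cong[OF xa, of "\<lambda>z. z$i"] by simp
    have "- m1 \<le> \<alpha>"
    proof -
      have "- \<alpha> \<le> m1" unfolding m1_def
      proof (rule Min.boundedI)
        show "finite (range (\<lambda>i. \<nu> $ i / \<pi> $ i))" by simp
        show "range (\<lambda>i. \<nu> $ i / \<pi> $ i) \<noteq> {}" by simp
        fix a assume "a \<in> range (\<lambda>i. \<nu> $ i / \<pi> $ i)"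
        then obtain i where a: "a = \<nu> $ i / \<pi> $ i" by auto
        have "- \<alpha> * \<pi>$i \<le> \<nu>$i" using xr[of i] xc[of i] by simp
        then show "- \<alpha> \<le> a" unfolding a using ppos[rule_format, of i] by (simp add: pos_le_divide_eq)
      qed
      then show ?thesis by simp
    qed
    moreover have "\<alpha> \<le> m2" unfolding m2_def
    proof (rule Min.boundedI)
      show "finite (range (\<lambda>i. (w $ i - \<nu> $ i) / \<pi> $ i))" by simp
      show "range (\<lambda>i. (w $ i - \<nu> $ i) / \<pi> $ i) \<noteq> {}" by simp
      fix a assume "a \<in> range (\<lambda>i. (w $ i - \<nu> $ i) / \<pi> $ i)"
      then obtain i where a: "a = (w $ i - \<nu> $ i) / \<pi> $ i" by auto
      have "\<alpha> * \<pi>$i \<le> w$i - \<nu>$i" using xr[of i] xc[of i] by simp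
      then show "\<alpha> \<le> a" unfolding a using ppos[rule_format, of i] by (simp add: pos_le_divide_eq)
    qed
    moreover have "x = \<nu> + \<alpha> *\<^sub>R \<pi>" using xa by (simp add: algebra_simps)
    ultimately show ?thesis unfolding S_def by blast
  qed
  have fixX: "x = transpose P *v x + c" if "x \<in> X" "y \<in> X" "x \<noteq> y" for x y
    using two_fix[OF st irr w0 pinv ppos, of x c y] that unfolding X_def by blast
  have fwd: "(\<Sum>i\<in>UNIV. c $ i) = 0 \<and> m1 + m2 > 0 \<and> X = S" if xX: "x \<in> X" and yX: "y \<in> X" and ne: "x \<noteq> y" for x y
  proof -
    have xf: "x = transpose P *v x + c" using fixX that by blast
    have yf: "y = transpose P *v y + c" using fixX that by blast
    have "(\<Sum>i\<in>UNIV. x $ i) = (\<Sum>i\<in>UNIV. (transpose P *v x) $ i + c $ i)"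
      using arg_cong[OF xf, of "\<lambda>z. \<Sum>i\<in>UNIV. z $ i"] by simp
    also have "\<dots> = (\<Sum>i\<in>UNIV. x $ i) + (\<Sum>i\<in>UNIV. c $ i)" by (simp add: sum.distrib sum_Pt[OF st])
    finally have c0: "(\<Sum>i\<in>UNIV. c $ i) = 0" by simp
    obtain a where a: "x = \<nu> + a *\<^sub>R \<pi>" "- m1 \<le> a" "a \<le> m2" using Xsub[OF c0 xX xf] unfolding S_def by blast
    obtain b where b: "y = \<nu> + b *\<^sub>R \<pi>" "- m1 \<le> b" "b \<le> m2" using Xsub[OF c0 yX yf] unfolding S_def by blast
    have "a \<noteq> b"
    proof
      assume "a = b"
      then show False using a(1) b(1) ne by simp
    qed
    then have m: "m1 + m2 > 0" using a b by linarith
    have "X \<subseteq> S"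
    proof
      fix z assume zX: "z \<in> X"
      have "z = transpose P *v z + c"
      proof (cases "z = x")
        case True then show ?thesis using xf by simp
      next
        case False then show ?thesis using fixX[OF zX xX] by blast
      qed
      then show "z \<in> S" by (rule Xsub[OF c0 zX])
    qed
    moreover have "S \<subseteq> X" using inS[OF c0] unfolding S_def by blast
    ultimately show ?thesis using c0 m by blast
  qed
  have bwd: "\<exists>x\<in>X. \<exists>y\<in>X. x \<noteq> y" if c0: "(\<Sum>i\<in>UNIV. c $ i) = 0" and m: "m1 + m2 > 0"
  proof -
    have "\<nu> + (- m1) *\<^sub>R \<pi> \<in> X" by (rule inS[OF c0]) (use m in auto)
    moreover have "\<nu> + m2 *\<^sub>R \<pi> \<in> X" by (rule inS[OF c0]) (use m in auto)
    moreover have "\<nu> + (- m1) *\<^sub>R \<pi> \<noteq> \<nu> + m2 *\<^sub>R \<pi>"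
    proof
      assume "\<nu> + (- m1) *\<^sub>R \<pi> = \<nu> + m2 *\<^sub>R \<pi>"
      then have "(\<nu> + (- m1) *\<^sub>R \<pi>)$undefined = (\<nu> + m2 *\<^sub>R \<pi>)$undefined" by simp
      then have "(- m1) * \<pi>$undefined = m2 * \<pi>$undefined" by simp
      then have "(- m1 - m2) * \<pi>$undefined = 0" by (simp add: algebra_simps)
      then have "- m1 = m2" using ppos[rule_format, of undefined] by simp
      then show False using m by simp
    qed
    ultimately show ?thesis by blast
  qed
  have main: "((\<exists>x\<in>X. \<exists>y\<in>X. x \<noteq> y) \<longleftrightarrow> (\<Sum>i\<in>UNIV. c $ i) = 0 \<and> m1 + m2 > 0)
     \<and> ((\<exists>x\<in>X. \<exists>y\<in>X. x \<noteq> y) \<longrightarrow> X = S)"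
  proof (rule conjI)
    show "(\<exists>x\<in>X. \<exists>y\<in>X. x \<noteq> y) \<longleftrightarrow> (\<Sum>i\<in>UNIV. c $ i) = 0 \<and> m1 + m2 > 0"
    proof
      assume "\<exists>x\<in>X. \<exists>y\<in>X. x \<noteq> y"
      then obtain x y where "x \<in> X" "y \<in> X" "x \<noteq> y" by blast
      from fwd[OF this] show "(\<Sum>i\<in>UNIV. c $ i) = 0 \<and> m1 + m2 > 0" by simp
    next
      assume "(\<Sum>i\<in>UNIV. c $ i) = 0 \<and> m1 + m2 > 0"
      then show "\<exists>x\<in>X. \<exists>y\<in>X. x \<noteq> y" using bwd by simp
    qed
  next
    show "(\<exists>x\<in>X. \<exists>y\<in>X. x \<noteq> y) \<longrightarrow> X = S"
    proof
      assume "\<exists>x\<in>X. \<exists>y\<in>X. x \<noteq> y"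
      then obtain x y where "x \<in> X" "y \<in> X" "x \<noteq> y" by blast
      from fwd[OF this] show "X = S" by simp
    qed
  qed
  then show ?thesis unfolding m1_def S_def m2_def .
qed

end
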